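(* Let $n\ge2$, $q^{\min}=\bar q_0(\{1,2\})$ and $q^{\max}=\bar q_0(\{1\})$. With $v_1(q)=V(qe^{\theta_1-1})$, the function $$R(q)=\frac{v_1(q)}{1-v_1(q)}+\frac{1}{q+v_1(q)}-1$$ is quasi-convex on $[q^{\min},q^{\max}]$, with no restriction on the value of $v_1$.
   Context: Sellers $\mathbb{S}=\{1,\dots,n\}$ with qualities $\theta_1\ge\dots\ge\theta_n\ge0$. $V:(0,\infty)\to(0,1)$: $V(x)=$ the unique $v\in(0,1)$ with $v\exp(v/(1-v))=x$. For nonempty $T\subseteq\mathbb{S}$, $\bar q_0(T)\in(0,1)$ is the unique solution of $\sum_{i\in T}V(\bar q_0e^{\theta_i-1})=1-\bar q_0$. A function $f$ on an interval is quasi-convex if $f(\lambda x+(1-\lambda)y)\le\max\{f(x),f(y)\}$ for all $x,y$ in the interval and $\lambda\in[0,1]$. *)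

theory Defs
  imports "HOL-Analysis.Analysis"
begin

definition Vfun :: "real \<Rightarrow> real" where
  "Vfun x = (THE v. 0 < v \<and> v < 1 \<and> v * exp (v / (1 - v)) = x)"

definition q0bar :: "(nat \<Rightarrow> real) \<Rightarrow> nat set \<Rightarrow> real" where
  "q0bar \<theta> T = (THE q. 0 < q \<and> q < 1 \<and>
      (\<Sum>i\<in>T. Vfun (q * exp (\<theta> i - 1))) = 1 - q)"

definition quasi_convex_on :: "real set \<Rightarrow> (real \<Rightarrow> real) \<Rightarrow> bool" where
  "quasi_convex_on I f \<longleftrightarrow> (\<forall>x\<in>I. \<forall>y\<in>I. \<forall>t::real. 0 \<le> t \<and> t \<le> 1 \<longrightarrow>
      f (t * x + (1 - t) * y) \<le> max (f x) (f y))"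

end

theory Submission
  imports Defs
begin


definition kf :: "real \<Rightarrow> real" where "kf v = v * exp (v / (1 - v))"

lemma kf_strict: "0 < a \<Longrightarrow> a < b \<Longrightarrow> b < 1 \<Longrightarrow> kf a < kf b"
proof -
  assume h: "0 < a" "a < b" "b < 1"
  have "a / (1 - a) < b / (1 - b)" using h by (simp add: field_simps)
  hence "exp (a/(1-a)) < exp (b/(1-b))" by simp
  thus ?thesis unfolding kf_def using h by (intro mult_strict_mono) auto
qed

lemma kf_ge: "0 < v \<Longrightarrow> v < 1 \<Longrightarrow> v \<le> kf v"
  unfolding kf_def using one_le_exp_iff[of "v/(1-v)"] by (simp add: mult_le_cancel_left1)

lemma kf_cont: "v < 1 \<Longrightarrow> isCont kf v"
  unfolding kf_def by (intro continuous_intros) auto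

lemma kf_surj: assumes "0 < x" shows "\<exists>v. 0 < v \<and> v < 1 \<and> kf v = x"
proof -
  define lo where "lo = min (1/2) (x / 6)"
  define hi where "hi = (2*x+1)/(2*x+2)"
  have lo: "0 < lo" "lo \<le> 1/2" using assms by (auto simp: lo_def)
  have hi: "1/2 \<le> hi" "hi < 1" using assms by (auto simp: hi_def field_simps)
  have "lo / (1 - lo) \<le> 1" using lo by (simp add: field_simps)
  hence "exp (lo/(1-lo)) \<le> exp 1" by simp
  also have "exp (1::real) \<le> 3" using exp_le by simp
  finally have "kf lo \<le> lo * 3" unfolding kf_def using lo by (intro mult_left_mono) auto
  also have "lo * 3 < x" using assms by (auto simp: lo_def)
  finally have klo: "kf lo < x" .
  have "hi / (1 - hi) = 2*x+1" using assms by (simp add: hi_def field_simps)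
  hence "kf hi = hi * exp (2*x+1)" by (simp add: kf_def)
  also have "\<dots> \<ge> hi * (1 + (2*x+1))" using hi by (intro mult_left_mono exp_ge_add_one_self) auto
  finally have "kf hi \<ge> hi * (2*x+2)" by (simp add: algebra_simps)
  also have "hi * (2*x+2) = 2*x+1" using assms by (simp add: hi_def)
  finally have khi: "x \<le> kf hi" using assms by simp
  have "\<exists>v. lo \<le> v \<and> v \<le> hi \<and> kf v = x"
    by (rule IVT) (use klo khi lo hi in \<open>auto intro!: kf_cont\<close>)
  then obtain v where "lo \<le> v" "v \<le> hi" "kf v = x" by blast
  then show ?thesis using lo hi by (intro exI[of _ v]) auto
qed

lemma Vfun_prop: assumes "0 < x" shows "0 < Vfun x \<and> Vfun x < 1 \<and> kf (Vfun x) = x"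
proof -
  have ex: "\<exists>!v. 0 < v \<and> v < 1 \<and> v * exp (v / (1 - v)) = x"
  proof -
    obtain v where v: "0 < v" "v < 1" "kf v = x" using kf_surj[OF assms] by blast
    show ?thesis
    proof (rule ex1I[of _ v])
      show "0 < v \<and> v < 1 \<and> v * exp (v / (1 - v)) = x" using v by (simp add: kf_def)
      fix w assume w: "0 < w \<and> w < 1 \<and> w * exp (w / (1 - w)) = x"
      show "w = v"
      proof (rule ccontr)
        assume "w \<noteq> v"
        then consider "w < v" | "v < w" by linarith
        then show False using kf_strict[of w v] kf_strict[of v w] v w by (cases; auto simp: kf_def)
      qed
    qed
  qed
  show ?thesis using theI'[OF ex] unfolding Vfun_def kf_def by blast
qed

lemma Vfun_kf: "0 < v \<Longrightarrow> v < 1 \<Longrightarrow> Vfun (kf v) = v"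
proof -
  assume v: "0 < v" "v < 1"
  have "0 < kf v" using v kf_ge[of v] by linarith
  from Vfun_prop[OF this] have w: "0 < Vfun (kf v)" "Vfun (kf v) < 1" "kf (Vfun (kf v)) = kf v" by auto
  show ?thesis
  proof (rule ccontr)
    assume "Vfun (kf v) \<noteq> v"
    then consider "Vfun (kf v) < v" | "v < Vfun (kf v)" by linarith
    then show False using kf_strict[of "Vfun (kf v)" v] kf_strict[of v "Vfun (kf v)"] v w by cases auto
  qed
qed

lemma Vfun_strict: "0 < x \<Longrightarrow> x < y \<Longrightarrow> Vfun x < Vfun y"
proof (rule ccontr)
  assume h: "0 < x" "x < y" "\<not> Vfun x < Vfun y"
  have a: "0 < Vfun x" "Vfun x < 1" "kf (Vfun x) = x" using Vfun_prop[of x] h by auto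
  have b: "0 < Vfun y" "Vfun y < 1" "kf (Vfun y) = y" using Vfun_prop[of y] h by auto
  show False
  proof (cases "Vfun x = Vfun y")
    case True then show ?thesis using a b h by auto
  next
    case False then show ?thesis using kf_strict[of "Vfun y" "Vfun x"] a b h by auto
  qed
qed

lemma Vfun_mono: "0 < x \<Longrightarrow> x \<le> y \<Longrightarrow> Vfun x \<le> Vfun y"
  using Vfun_strict[of x y] by (cases "x = y") auto

lemma Vfun_le: "0 < x \<Longrightarrow> Vfun x \<le> x"
  using Vfun_prop[of x] kf_ge[of "Vfun x"] by auto

lemma Vfun_cont: assumes "0 < x" shows "isCont Vfun x"
proof -
  define v where "v = Vfun x"
  have v: "0 < v" "v < 1" "kf v = x" using Vfun_prop[OF assms] by (auto simp: v_def)
  define d where "d = min v (1 - v) / 2"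
  have d: "0 < d" using v by (auto simp: d_def)
  have zz: "0 < z \<and> z < 1" if "\<bar>z - v\<bar> \<le> d" for z
  proof -
    have "\<bar>z - v\<bar> * 2 \<le> v" "\<bar>z - v\<bar> * 2 \<le> 1 - v" using that by (auto simp: d_def)
    then show ?thesis using v by (auto simp: abs_if split: if_splits)
  qed
  have "isCont Vfun (kf v)"
    by (rule isCont_inverse_function[OF d]) (use zz Vfun_kf kf_cont in auto)
  then show ?thesis using v by simp
qed



lemma q0bar_prop:
  assumes T: "finite T" "T \<noteq> {}"
  shows "0 < q0bar \<theta> T \<and> q0bar \<theta> T < 1 \<and> (\<Sum>i\<in>T. Vfun (q0bar \<theta> T * exp (\<theta> i - 1))) = 1 - q0bar \<theta> T"
proof -
  define S where "S q = (\<Sum>i\<in>T. Vfun (q * exp (\<theta> i - 1)))" for q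
  have Sstrict: "S x < S y" if "0 < x" "x < y" for x y
    unfolding S_def using T that
    by (intro sum_strict_mono) (auto intro!: Vfun_strict)
  have Scont: "isCont (\<lambda>q. S q + q) x" if "0 < x" for x
  proof -
    have "isCont (\<lambda>q. Vfun (q * exp (\<theta> i - 1))) x" for i
      by (rule isCont_o2[where g=Vfun]) (use that in \<open>auto intro!: Vfun_cont\<close>)
    then show ?thesis unfolding S_def by (intro continuous_intros) auto
  qed
  define C where "C = (\<Sum>i\<in>T. exp (\<theta> i - 1))"
  have C: "0 < C" unfolding C_def using T by (intro sum_pos) auto
  define qs where "qs = 1 / (C + 1)"
  have qs: "0 < qs" "qs < 1" using C by (auto simp: qs_def field_simps)
  have "S qs \<le> (\<Sum>i\<in>T. qs * exp (\<theta> i - 1))"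
    unfolding S_def using qs by (intro sum_mono Vfun_le) auto
  also have "\<dots> = qs * C" by (simp add: C_def sum_distrib_left)
  finally have p1: "S qs + qs \<le> 1" using C by (simp add: qs_def field_simps)
  have "0 < S 1" unfolding S_def using T by (intro sum_pos) (auto simp: Vfun_prop)
  hence p2: "1 \<le> S 1 + 1" by simp
  obtain q where q: "qs \<le> q" "q \<le> 1" "S q + q = 1"
    using IVT[of "\<lambda>q. S q + q" qs 1 1] p1 p2 qs Scont by force
  have "q \<noteq> 1" using q \<open>0 < S 1\<close> by auto
  hence qq: "0 < q" "q < 1" using q qs by auto
  have ex: "\<exists>!q. 0 < q \<and> q < 1 \<and> S q = 1 - q"
  proof (rule ex1I[of _ q])
    show "0 < q \<and> q < 1 \<and> S q = 1 - q" using qq q by auto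
    fix r assume r: "0 < r \<and> r < 1 \<and> S r = 1 - r"
    show "r = q"
    proof (rule ccontr)
      assume "r \<noteq> q"
      then consider "r < q" | "q < r" by linarith
      then show False using Sstrict[of r q] Sstrict[of q r] r qq q by cases auto
    qed
  qed
  show ?thesis using theI'[OF ex] unfolding q0bar_def S_def by blast
qed



definition gp :: "real \<Rightarrow> real \<Rightarrow> real" where "gp q v = v * q^2 + q * v^2 + q * v - q - v + 2 * v^2"
definition gq :: "real \<Rightarrow> real \<Rightarrow> real" where "gq q v = 2 * v * q + v^2 + v - 1"
definition gv :: "real \<Rightarrow> real \<Rightarrow> real" where "gv q v = q^2 + 2 * q * v + q - 1 + 4 * v"

lemma poly1:
  assumes "0 < v" "v < 1" "0 < q" "q + v \<le> 1" "gp q v = 0"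
  shows "1/2 \<le> v"
proof (rule ccontr)
  assume v: "\<not> 1/2 \<le> v"
  show False
  proof (cases "q \<le> 1/2")
    case True
    have id: "gp q v = (q+2)*(v * (v-1/2)) - q * (1-2 * v) + v * (q * (q-1/2))"
      by (simp add: gp_def field_simps power2_eq_square)
    have "(q+2)*(v * (v-1/2)) < 0" using assms v by (intro mult_pos_neg mult_pos_neg) auto
    moreover have "q * (1-2 * v) > 0" using assms v by auto
    moreover have "v * (q * (q-1/2)) \<le> 0" using assms True by (intro mult_nonneg_nonpos mult_nonneg_nonpos) auto
    ultimately show False using id assms by linarith
  next
    case False
    have id: "(1-q) * gp q v = (1-q)*(q+2)*(v * (v-(1-q))) - q * (1-q-v) + (1-2 * q) * v"
      by (simp add: gp_def algebra_simps power2_eq_square)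
    have "(1-q)*(q+2)*(v * (v-(1-q))) \<le> 0" using assms by (intro mult_nonneg_nonpos mult_nonneg_nonpos) auto
    moreover have "q * (1-q-v) \<ge> 0" using assms by auto
    moreover have "(1-2 * q) * v < 0" using assms False by (intro mult_neg_pos) auto
    moreover have "(1-q) * gp q v = 0" using assms by simp
    ultimately show False using id by linarith
  qed
qed

lemma poly2:
  assumes "0 < v" "v < 1" "0 < q" "q + v \<le> 1" "1/2 \<le> v"
  shows "0 < gv q v * (v * (1-v)^2) + gq q v * (q * (1 - v + v^2))"
proof -
  have "q^2 \<ge> 0" "q * v \<ge> 0" using assms by auto
  hence gv1: "gv q v \<ge> 1" using assms unfolding gv_def by linarith
  have w: "0 < v * (1-v)^2" using assms by auto
  have t1: "gv q v * (v * (1-v)^2) \<ge> v * (1-v)^2" using gv1 w by (simp add: mult_le_cancel_right1)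
  have "v * v \<ge> 0" "v * v \<le> v * 1" using assms by (auto intro: mult_left_mono)
  moreover have "v^2 = v * v" by (simp add: power2_eq_square)
  ultimately have D: "0 < 1 - v + v^2" "1 - v + v^2 \<le> 1" using assms by linarith+
  show ?thesis
  proof (cases "gq q v \<ge> 0")
    case True
    then have "gq q v * (q * (1 - v + v^2)) \<ge> 0" using D assms by auto
    then show ?thesis using t1 w by linarith
  next
    case False
    have vv: "v < 0.62"
    proof (rule ccontr)
      assume "\<not> v < 0.62"
      hence "v * v \<ge> 0.62 * 0.62" by (intro mult_mono) auto
      moreover have "v * q \<ge> 0" using assms by auto
      ultimately show False using False \<open>\<not> v < 0.62\<close> unfolding gq_def by (simp add: power2_eq_square)
    qed
    have "1 - v > 0.38" using vv by simp
    hence "(1-v)^2 > 0.38^2" by (intro power_strict_mono) auto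
    moreover have "(0.38::real)^2 = 0.1444" by (simp add: power2_eq_square)
    ultimately have A2: "0.1444 \<le> (1-v)^2" by linarith
    have A1: "0.5 \<le> v" using assms by simp
    have "0.5 * 0.1444 \<le> v * (1-v)^2" by (rule mult_mono[OF A1 A2]) (use assms in auto)
    hence t1': "gv q v * (v * (1-v)^2) * 100 \<ge> 7" using t1 by simp
    have f1: "v * q \<ge> (1/2) * q" using assms by (intro mult_right_mono) auto
    have f2: "v * v \<ge> (1/2)*(1/2)" using assms by (intro mult_mono) auto
    have gql: "gq q v \<ge> q - 1/4" using assms f1 f2 unfolding gq_def power2_eq_square by linarith
    have "gq q v * (q * (1 - v + v^2)) \<ge> gq q v * q"
    proof -
      have "gq q v * q \<le> 0" using False assms by (simp add: mult_nonpos_nonneg)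
      moreover have "1 - v + v^2 - 1 \<le> 0" using D by linarith
      ultimately have "0 \<le> (gq q v * q) * (1 - v + v^2 - 1)" by (rule mult_nonpos_nonpos)
      then show ?thesis by (simp add: algebra_simps)
    qed
    moreover have "gq q v * q \<ge> (q - 1/4) * q" using gql assms by (intro mult_right_mono) auto
    moreover have "(q - 1/4) * q \<ge> - 1/64"
    proof -
      have "0 \<le> (q - 1/8)^2" by simp
      thus ?thesis by (simp add: power2_eq_square algebra_simps)
    qed
    ultimately show ?thesis using t1' by linarith
  qed
qed



definition phi :: "real \<Rightarrow> real \<Rightarrow> real" where "phi c v = v * exp (v / (1 - v)) / c"
definition Ff :: "real \<Rightarrow> real \<Rightarrow> real" where "Ff c v = v / (1 - v) + 1 / (phi c v + v) - 1"
definition dphi :: "real \<Rightarrow> real \<Rightarrow> real" where "dphi c v = phi c v * (1/v + 1/(1-v)^2)"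
definition dF :: "real \<Rightarrow> real \<Rightarrow> real" where
  "dF c v = 1/(1-v)^2 - (dphi c v + 1)/(phi c v + v)^2"

lemma phi_pos: "0 < c \<Longrightarrow> 0 < v \<Longrightarrow> 0 < phi c v"
  by (simp add: phi_def)

lemma phi_deriv: assumes "0 < c" "0 < v" "v < 1"
  shows "(phi c has_real_derivative dphi c v) (at v)"
proof -
  have "((\<lambda>v. v * exp (v / (1 - v)) / c) has_real_derivative
     (exp (v/(1-v)) + v * (exp (v/(1-v)) * ((1 * (1 - v) - v * (0 - 1)) / (1 - v)^2))) / c) (at v)"
    using assms by (auto intro!: derivative_eq_intros simp: power2_eq_square)
  moreover have "(exp (v/(1-v)) + v * (exp (v/(1-v)) * ((1 * (1 - v) - v * (0 - 1)) / (1 - v)^2))) / c = dphi c v"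
    using assms by (simp add: dphi_def phi_def field_simps power2_eq_square)
  ultimately show ?thesis unfolding phi_def[abs_def] by simp
qed

lemma phi_cont: "0 < c \<Longrightarrow> 0 < v \<Longrightarrow> v < 1 \<Longrightarrow> isCont (phi c) v"
  using phi_deriv DERIV_isCont by blast

lemma F_deriv: assumes "0 < c" "0 < v" "v < 1"
  shows "(Ff c has_real_derivative dF c v) (at v)"
proof -
  have p: "0 < phi c v" using phi_pos assms by auto
  have "((\<lambda>v. v / (1 - v) + 1 / (phi c v + v) - 1) has_real_derivative
      (1 * (1 - v) - v * (0 - 1)) / (1 - v)^2 + (- (1 * (dphi c v + 1)) / (phi c v + v)^2) - 0) (at v)"
    using assms p by (auto intro!: derivative_eq_intros phi_deriv simp: power2_eq_square)
  moreover have "(1 * (1 - v) - v * (0 - 1)) / (1 - v)^2 + (- (1 * (dphi c v + 1)) / (phi c v + v)^2) - 0 = dF c v"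
    using assms by (simp add: dF_def add_divide_distrib diff_divide_distrib)
  ultimately show ?thesis unfolding Ff_def[abs_def] by simp
qed

lemma dphi_mul: assumes "0 < v" "v < 1"
  shows "dphi c v * (v * (1-v)^2) = phi c v * (1 - v + v^2)"
proof -
  have nz: "(1 - v)^2 \<noteq> 0" "v \<noteq> 0" using assms by auto
  have "dphi c v * (v * (1-v)^2) = phi c v * ((1-v)^2+v)" unfolding dphi_def
    using nz by (simp add: field_simps)
  also have "\<dots> = phi c v * (1 - v + v^2)" by (simp add: power2_eq_square algebra_simps)
  finally show ?thesis .
qed

lemma dF_sign: assumes "0 < c" "0 < v" "v < 1"
  shows "dF c v * (v * (1-v)^2 * (phi c v + v)^2) = gp (phi c v) v"
proof -
  have p: "0 < phi c v" using phi_pos assms by auto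
  define P where "P = phi c v"
  have nz: "(P + v)^2 \<noteq> 0" "(1 - v)^2 \<noteq> 0" "v \<noteq> 0" using p assms by (auto simp: P_def)
  have e1: "1/(1-v)^2 * (v *(1-v)^2*(P+v)^2) = v *(P+v)^2" using nz by simp
  have e2: "(dphi c v+1)/(P+v)^2 * (v *(1-v)^2*(P+v)^2) = (dphi c v+1)*(v *(1-v)^2)" using nz by simp
  have e3: "dphi c v * (v *(1-v)^2) = P*((1-v)^2+v)" unfolding dphi_def P_def[symmetric]
    using nz by (simp add: field_simps)
  have "dF c v * (v * (1-v)^2 * (P + v)^2) = v *(P+v)^2 - (dphi c v+1)*(v *(1-v)^2)"
    unfolding dF_def P_def[symmetric] using e1 e2 by (simp add: left_diff_distrib)
  also have "\<dots> = v *(P+v)^2 - P*((1-v)^2+v) - v *(1-v)^2" using e3 by (simp add: algebra_simps)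
  also have "\<dots> = gp P v" by (simp add: gp_def power2_eq_square algebra_simps)
  finally show ?thesis unfolding P_def .
qed

lemma h_deriv: assumes "0 < c" "0 < v" "v < 1"
  shows "((\<lambda>v. gp (phi c v) v) has_real_derivative gq (phi c v) v * dphi c v + gv (phi c v) v) (at v)"
proof -
  have "((\<lambda>v. gp (phi c v) v) has_real_derivative
     (dphi c v * (v * (2 * phi c v)) + (phi c v)^2 + (dphi c v * v^2 + phi c v * (2 * v)) + (dphi c v * v + phi c v) - dphi c v - 1 + 2 * (2 * v))) (at v)"
    unfolding gp_def using assms
    by (auto intro!: derivative_eq_intros phi_deriv simp: power2_eq_square algebra_simps)
  moreover have "dphi c v * (v * (2 * phi c v)) + (phi c v)^2 + (dphi c v * v^2 + phi c v * (2 * v)) + (dphi c v * v + phi c v) - dphi c v - 1 + 2 * (2 * v)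
     = gq (phi c v) v * dphi c v + gv (phi c v) v"
    by (simp add: gq_def gv_def algebra_simps power2_eq_square)
  ultimately show ?thesis by simp
qed

lemma h_sign: assumes "0 < c" "0 < v" "v < 1" "phi c v + v \<le> 1" "gp (phi c v) v = 0"
  shows "0 < gq (phi c v) v * dphi c v + gv (phi c v) v"
proof -
  define P where "P = phi c v"
  have p: "0 < P" using phi_pos assms by (auto simp: P_def)
  have v2: "1/2 \<le> v" using poly1[of v P] assms p by (auto simp: P_def)
  have pos: "0 < gv P v * (v *(1-v)^2) + gq P v * (P * (1 - v + v^2))"
    using poly2[of v P] assms p v2 by (auto simp: P_def)
  have w: "0 < v * (1-v)^2" using assms by auto
  have "(gq P v * dphi c v + gv P v) * (v * (1-v)^2) = gq P v * (dphi c v * (v * (1-v)^2)) + gv P v * (v * (1-v)^2)"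
    by (simp add: algebra_simps)
  also have "\<dots> = gv P v * (v * (1-v)^2) + gq P v * (P * (1 - v + v^2))"
    using dphi_mul[of v c] assms unfolding P_def[symmetric] by simp
  finally have "(gq P v * dphi c v + gv P v) * (v * (1-v)^2) = gv P v * (v * (1-v)^2) + gq P v * (P * (1 - v + v^2))" .
  with pos w show ?thesis unfolding P_def[symmetric] by (metis zero_less_mult_pos2)
qed



lemma crossing:
  assumes c: "0 < c" and ab: "0 < a" "a < b" "b < 1"
    and reg: "\<And>v. a \<le> v \<Longrightarrow> v \<le> b \<Longrightarrow> phi c v + v \<le> 1"
    and ha: "gp (phi c a) a > 0"
  shows "gp (phi c b) b \<ge> 0"
proof (rule ccontr)
  assume hb: "\<not> gp (phi c b) b \<ge> 0"
  define h where "h v = gp (phi c v) v" for v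
  have hd: "(h has_real_derivative gq (phi c v) v * dphi c v + gv (phi c v) v) (at v)" if "a \<le> v" "v \<le> b" for v
    unfolding h_def[abs_def] using h_deriv[of c v] c ab that by auto
  have hc: "isCont h v" if "a \<le> v" "v \<le> b" for v using hd[OF that] DERIV_isCont by blast
  define S where "S = {v \<in> {a..b}. h v \<le> 0}"
  have bS: "b \<in> S" using hb ab by (auto simp: S_def h_def)
  have cl: "closed S" unfolding S_def
    by (rule continuous_on_closed_Collect_le) (auto intro!: continuous_at_imp_continuous_on hc)
  have bdd: "bdd_below S" unfolding S_def by (rule bdd_belowI[of _ a]) auto
  define s where "s = Inf S"
  have sS: "s \<in> S" unfolding s_def using closed_contains_Inf[of S] bS bdd cl by auto
  have sle: "s \<le> x" if "x \<in> S" for x unfolding s_def using cInf_lower[OF that bdd] .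
  have s1: "a \<le> s" "s \<le> b" "h s \<le> 0" using sS by (auto simp: S_def)
  have "a \<noteq> s" using s1 ha by (auto simp: h_def)
  hence as: "a < s" using s1 by auto
  have "\<exists>x. a \<le> x \<and> x \<le> s \<and> h x = 0"
  proof -
    have ha': "h a > 0" using ha by (simp add: h_def)
    show ?thesis by (rule IVT2) (use s1 ha' hc in auto)
  qed
  then obtain x where x: "a \<le> x" "x \<le> s" "h x = 0" by blast
  have "x \<in> S" using x s1 by (auto simp: S_def)
  hence "x = s" using sle x by force
  hence hs0: "h s = 0" using x by simp
  have "0 < gq (phi c s) s * dphi c s + gv (phi c s) s"
    by (rule h_sign) (use c ab s1 reg hs0 in \<open>auto simp: h_def\<close>)
  then obtain d where d: "d > 0" "\<And>e. e > 0 \<Longrightarrow> e < d \<Longrightarrow> h (s - e) < h s"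
    using DERIV_pos_inc_left[OF hd[OF s1(1,2)]] by blast
  define e where "e = min (d/2) ((s - a)/2)"
  have "e \<le> (s - a)/2" "e \<le> d/2" unfolding e_def by (rule min.cobounded2, rule min.cobounded1)
  hence e: "e > 0" "e < d" "a \<le> s - e" using d as by (auto simp: e_def)
  have "h (s - e) < 0" using d(2)[OF e(1,2)] hs0 by simp
  hence "s - e \<in> S" using e s1 by (auto simp: S_def)
  hence "s \<le> s - e" by (rule sle)
  thus False using e by simp
qed

lemma core:
  assumes c: "0 < c" and u: "0 < u1" "u1 \<le> u" "u \<le> u2" "u2 < 1"
    and reg: "\<And>v. u1 \<le> v \<Longrightarrow> v \<le> u2 \<Longrightarrow> phi c v + v \<le> 1"
  shows "Ff c u \<le> max (Ff c u1) (Ff c u2)"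
proof (rule ccontr)
  assume "\<not> Ff c u \<le> max (Ff c u1) (Ff c u2)"
  hence f: "Ff c u1 < Ff c u" "Ff c u2 < Ff c u" by auto
  hence lt: "u1 < u" "u < u2" using u by (auto simp: le_less)
  have der: "(Ff c has_real_derivative dF c x) (at x)" if "u1 \<le> x" "x \<le> u2" for x
    using F_deriv[of c x] c u that by auto
  obtain \<alpha> where al: "u1 < \<alpha>" "\<alpha> < u" "Ff c u - Ff c u1 = (u - u1) * dF c \<alpha>"
    using MVT2[of u1 u "Ff c" "dF c"] lt der by auto
  obtain \<beta> where be: "u < \<beta>" "\<beta> < u2" "Ff c u2 - Ff c u = (u2 - u) * dF c \<beta>"
    using MVT2[of u u2 "Ff c" "dF c"] lt der by auto
  have "0 < (u - u1) * dF c \<alpha>" using al f by linarith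
  hence "dF c \<alpha> > 0" using lt by (simp add: zero_less_mult_iff)
  have "(u2 - u) * dF c \<beta> < 0" using be f by linarith
  hence "dF c \<beta> < 0" using lt by (simp add: mult_less_0_iff)
  have Mpos: "0 < v * (1-v)^2 * (phi c v + v)^2" if "0 < v" "v < 1" for v
    using that phi_pos[OF c, of v] by auto
  have a01: "0 < \<alpha>" "\<alpha> < 1" using al lt u by auto
  have b01: "0 < \<beta>" "\<beta> < 1" using be lt u by auto
  have "gp (phi c \<alpha>) \<alpha> > 0"
    unfolding dF_sign[OF c a01, symmetric] using Mpos[OF a01] \<open>dF c \<alpha> > 0\<close> by (rule mult_pos_pos[rotated])
  moreover have "gp (phi c \<beta>) \<beta> < 0"
    unfolding dF_sign[OF c b01, symmetric] using \<open>dF c \<beta> < 0\<close> Mpos[OF b01] by (rule mult_neg_pos)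
  moreover have "gp (phi c \<beta>) \<beta> \<ge> 0"
    by (rule crossing[of c \<alpha> \<beta>]) (use c al be lt u reg calculation in auto)
  ultimately show False by simp
qed



lemma phi_mono: "0 < c \<Longrightarrow> 0 < v \<Longrightarrow> v \<le> w \<Longrightarrow> w < 1 \<Longrightarrow> phi c v \<le> phi c w"
  using kf_strict[of v w] unfolding phi_def kf_def
  by (cases "v = w") (auto intro: divide_right_mono)

lemma phi_Vfun: "0 < c \<Longrightarrow> 0 < q \<Longrightarrow> phi c (Vfun (q * c)) = q"
  using Vfun_prop[of "q * c"] unfolding phi_def kf_def by auto

lemma between:
  fixes \<theta> :: "nat \<Rightarrow> real" and x y z :: real
  defines "c \<equiv> exp (\<theta> 1 - 1)"
  defines "R \<equiv> (\<lambda>q. Vfun (q * c) / (1 - Vfun (q * c)) + 1 / (q + Vfun (q * c)) - 1)"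
  assumes xz: "x \<le> z" "z \<le> y" and x0: "0 < x"
    and yb: "y \<le> q0bar \<theta> {1}"
  shows "R z \<le> max (R x) (R y)"
proof -
  define b where "b = q0bar \<theta> {1}"
  have bp: "0 < b" "b < 1" "Vfun (b * c) = 1 - b"
    using q0bar_prop[of "{1::nat}" \<theta>] by (auto simp: b_def c_def)
  have c: "0 < c" by (simp add: c_def)
  define u1 where "u1 = Vfun (x * c)"
  define u where "u = Vfun (z * c)"
  define u2 where "u2 = Vfun (y * c)"
  have p1: "0 < u1" "u1 < 1" using Vfun_prop[of "x * c"] x0 c by (auto simp: u1_def)
  have p2: "u2 < 1" using Vfun_prop[of "y * c"] x0 xz c by (auto simp: u2_def)
  have o1: "u1 \<le> u" unfolding u1_def u_def using x0 xz c by (intro Vfun_mono) auto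
  have o2: "u \<le> u2" unfolding u2_def u_def using x0 xz c by (intro Vfun_mono) auto
  have "Vfun (y * c) \<le> Vfun (b * c)" using x0 xz yb c by (intro Vfun_mono) (auto simp: b_def)
  hence u2b: "u2 \<le> 1 - b" unfolding u2_def using bp by simp
  have reg: "phi c v + v \<le> 1" if "u1 \<le> v" "v \<le> u2" for v
  proof -
    have "phi c v \<le> phi c u2" using that p1 p2 c by (intro phi_mono) auto
    also have "phi c u2 = y" unfolding u2_def using phi_Vfun c x0 xz by auto
    finally show ?thesis using that u2b yb b_def by linarith
  qed
  have core': "Ff c u \<le> max (Ff c u1) (Ff c u2)"
    by (rule core) (use c p1 p2 o1 o2 reg in auto)
  have RF: "R q = Ff c (Vfun (q * c))" if "0 < q" for q
    unfolding R_def Ff_def using phi_Vfun[OF c that] by simp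
  show ?thesis using core' RF[of x] RF[of y] RF[of z] x0 xz
    unfolding u1_def u_def u2_def by auto
qed

theorem mainTheorem11:
  fixes n :: nat and \<theta> :: "nat \<Rightarrow> real"
  assumes "n \<ge> 2"
    and "\<And>i j. 1 \<le> i \<Longrightarrow> i \<le> j \<Longrightarrow> j \<le> n \<Longrightarrow> \<theta> j \<le> \<theta> i"
    and "\<And>i. 1 \<le> i \<Longrightarrow> i \<le> n \<Longrightarrow> 0 \<le> \<theta> i"
  shows "quasi_convex_on {q0bar \<theta> {1, 2} .. q0bar \<theta> {1}}
           (\<lambda>q. Vfun (q * exp (\<theta> 1 - 1)) / (1 - Vfun (q * exp (\<theta> 1 - 1)))
                + 1 / (q + Vfun (q * exp (\<theta> 1 - 1))) - 1)"
proof -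
  define a where "a = q0bar \<theta> {1, 2}"
  have a0: "0 < a" using q0bar_prop[of "{1::nat, 2}" \<theta>] by (auto simp: a_def)
  show ?thesis unfolding quasi_convex_on_def
  proof (intro ballI allI impI)
    fix x y t :: real
    assume x: "x \<in> {q0bar \<theta> {1, 2}..q0bar \<theta> {1}}" and y: "y \<in> {q0bar \<theta> {1, 2}..q0bar \<theta> {1}}"
      and t: "0 \<le> t \<and> t \<le> 1"
    define z where "z = t * x + (1 - t) * y"
    have x0: "0 < x" "0 < y" using x y a0 by (auto simp: a_def)
    show "Vfun (z * exp (\<theta> 1 - 1)) / (1 - Vfun (z * exp (\<theta> 1 - 1))) + 1 / (z + Vfun (z * exp (\<theta> 1 - 1))) - 1
      \<le> max (Vfun (x * exp (\<theta> 1 - 1)) / (1 - Vfun (x * exp (\<theta> 1 - 1))) + 1 / (x + Vfun (x * exp (\<theta> 1 - 1))) - 1)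
             (Vfun (y * exp (\<theta> 1 - 1)) / (1 - Vfun (y * exp (\<theta> 1 - 1))) + 1 / (y + Vfun (y * exp (\<theta> 1 - 1))) - 1)"
      unfolding z_def[symmetric]
    proof (cases "x \<le> y")
      case True
      have "t * (y - x) \<le> 1 * (y - x)" using t True by (intro mult_right_mono) auto
      moreover have "0 \<le> t * (y - x)" using t True by auto
      ultimately have "x \<le> z" "z \<le> y" by (auto simp: z_def algebra_simps)
      then show ?thesis using between[of x z y \<theta>] x0 y by auto
    next
      case False
      have "t * (x - y) \<le> 1 * (x - y)" using t False by (intro mult_right_mono) auto
      moreover have "0 \<le> t * (x - y)" using t False by auto
      ultimately have "y \<le> z" "z \<le> x" by (auto simp: z_def algebra_simps)
      then show ?thesis using between[of y z x \<theta>] x0 x by (auto simp: max.commute)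
    qed
  qed
qed

end
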